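(* For every integer $n\ge 2$, the Mutt polynomial \[ M(x)=\frac{(2n-1)T_{2n+1}(\sqrt{x})+(2n+1)T_{2n-1}(\sqrt{x})}{x\sqrt{x}} \] is a polynomial in $x$ of degree $n-1$ with leading coefficient $(2n-1)2^{2n}$, and \[ \operatorname{Disc}_x M(x)=\pm\,3\,(2n-1)^{n-3}(2n+1)^{n-2}\,n^{n-3}\,2^{2n^2-n-5}. \]
   Context: $T_m$ is the Chebyshev polynomial of the first kind, $T_m(\cos\theta)=\cos m\theta$. The discriminant of a polynomial of degree $d$ with leading coefficient $\gamma$ and roots $r_1,\dots,r_d$ is $\gamma^{2d-2}\prod_{i<j}(r_i-r_j)^2$ (equal to $1$ when $d=1$). *)

theory Defs
  imports "HOL-Analysis.Analysis" "HOL-Computational_Algebra.Polynomial"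
begin

definition cheb :: "nat \<Rightarrow> real poly" where
  "cheb m = (THE p. \<forall>t::real. poly p (cos t) = cos (real m * t))"

text \<open>Discriminant of a polynomial of degree d with leading coefficient g and
  roots r_1..r_d (with multiplicity):  g^(2d-2) * prod_{i<j} (r_i - r_j)^2.
  The roots are taken as any list rs with p = g * prod (X - r) (over the complex
  numbers such a list exists; the expression is symmetric in the roots).\<close>
definition disc :: "complex poly \<Rightarrow> complex" where
  "disc p = (let d = degree p;
                 rs = (SOME rs. length rs = d \<and>
                        p = smult (lead_coeff p) (prod_list (map (\<lambda>r. [:-r, 1:]) rs)))
             in lead_coeff p ^ (2 * d - 2) *
                (\<Prod>i<d. \<Prod>j\<in>{i<..<d}. (rs ! i - rs ! j)^2))"

end

theory Submission
  imports Defs "HOL-Computational_Algebra.Fundamental_Theorem_Algebra"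
begin


fun ch :: "nat \<Rightarrow> real poly" where
  "ch 0 = 1"
| "ch (Suc 0) = [:0, 1:]"
| "ch (Suc (Suc n)) = smult 2 (pCons 0 (ch (Suc n))) - ch n"

lemma ch_cos: "poly (ch m) (cos t) = cos (real m * t)"
proof (induction m rule: ch.induct)
  case (3 n)
  have e: "cos (real (Suc (Suc n)) * t) = 2 * cos t * cos (real (Suc n) * t) - cos (real n * t)"
  proof -
    have "cos (real (Suc (Suc n)) * t) = cos (real (Suc n) * t + t)" by (simp add: distrib_right)
    moreover have "cos (real n * t) = cos (real (Suc n) * t - t)" by (simp add: distrib_right)
    ultimately show ?thesis by (simp add: cos_add cos_diff)
  qed
  have "poly (ch (Suc (Suc n))) (cos t) = 2 * cos t * poly (ch (Suc n)) (cos t) - poly (ch n) (cos t)"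
    by simp
  also have "\<dots> = 2 * cos t * cos (real (Suc n) * t) - cos (real n * t)" using 3 by simp
  also have "\<dots> = cos (real (Suc (Suc n)) * t)" using e by simp
  finally show ?case .
qed auto

lemma poly_eqI_01:
  fixes p q :: "real poly"
  assumes "\<And>x. 0 < x \<Longrightarrow> x < 1 \<Longrightarrow> poly p x = poly q x"
  shows "p = q"
proof (rule ccontr)
  assume "p \<noteq> q"
  then have "p - q \<noteq> 0" by simp
  then have "finite {x. poly (p - q) x = 0}" by (rule poly_roots_finite)
  moreover have "{0<..<1::real} \<subseteq> {x. poly (p - q) x = 0}" using assms by auto
  ultimately have "finite {0<..<1::real}" by (rule finite_subset[rotated])
  then show False using infinite_Ioo[of "0::real" 1] by simp
qed

lemma cheb_eq: "cheb m = ch m"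
  unfolding cheb_def
proof (rule the_equality)
  show "\<forall>t. poly (ch m) (cos t) = cos (real m * t)" by (simp add: ch_cos)
next
  fix p assume h: "\<forall>t. poly p (cos t) = cos (real m * t)"
  show "p = ch m"
  proof (rule poly_eqI_01)
    fix x :: real assume "0 < x" "x < 1"
    then have "cos (arccos x) = x" by simp
    then show "poly p x = poly (ch m) x" using h ch_cos by metis
  qed
qed

lemma ch_coeff: "(\<forall>k>m. coeff (ch m) k = 0) \<and> coeff (ch m) m = (if m = 0 then 1 else 2 ^ (m - 1))"
proof (induction m rule: ch.induct)
  case (3 n)
  show ?case
  proof (intro conjI allI impI)
    fix k assume "k > Suc (Suc n)"
    then obtain j where j: "k = Suc j" "j > Suc n" by (cases k) auto
    then show "coeff (ch (Suc (Suc n))) k = 0" using 3 by auto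
  next
    show "coeff (ch (Suc (Suc n))) (Suc (Suc n)) = (if Suc (Suc n) = 0 then 1 else 2 ^ (Suc (Suc n) - 1))"
      using 3 by auto
  qed
qed (auto simp: coeff_pCons split: nat.splits)

definition PP :: "nat \<Rightarrow> real poly" where "PP n = pcompose (ch n) [:-1, 2:]"

lemma PP_cos: "poly (PP n) (cos t ^ 2) = cos (2 * real n * t)"
proof -
  have "poly (PP n) (cos t ^ 2) = poly (ch n) (cos (2 * t))"
  proof -
    have "poly [:-1, 2:] (cos t ^ 2) = cos (2 * t)" by (simp add: cos_double_cos)
    then show ?thesis by (simp add: PP_def poly_pcompose)
  qed
  also have "\<dots> = cos (2 * real n * t)" by (simp add: ch_cos mult_ac)
  finally show ?thesis .
qed

lemma PP_D1: "poly (pderiv (PP n)) (cos t ^ 2) * (cos t * sin t) = real n * sin (2 * real n * t)"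
proof -
  have d1: "((\<lambda>t. poly (PP n) (cos t ^ 2)) has_real_derivative
      (- (2 * cos t * sin t)) * poly (pderiv (PP n)) (cos t ^ 2)) (at t)"
    by (auto intro!: derivative_eq_intros)
  have d2: "((\<lambda>t. poly (PP n) (cos t ^ 2)) has_real_derivative
      - (sin (2 * real n * t) * (2 * real n))) (at t)"
    unfolding PP_cos by (auto intro!: derivative_eq_intros)
  from DERIV_unique[OF d1 d2] show ?thesis by (simp add: algebra_simps)
qed

lemma PP_ODE_pt:
  assumes "0 < x" "x < 1"
  shows "2 * x * (1 - x) * poly (pderiv (pderiv (PP n))) x + (1 - 2 * x) * poly (pderiv (PP n)) x
           + 2 * (real n)^2 * poly (PP n) x = 0"
proof -
  define t where "t = arccos (sqrt x)"
  have c: "cos t = sqrt x" unfolding t_def by (rule cos_arccos) (use assms real_sqrt_ge_zero[of x] real_sqrt_le_1_iff[of x] in linarith)+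
  have cx: "cos t ^ 2 = x" using assms by (simp add: c)
  have sx: "sin t ^ 2 = 1 - x" using cx sin_cos_squared_add[of t] by simp
  have d1: "((\<lambda>t. poly (pderiv (PP n)) (cos t ^ 2) * (cos t * sin t)) has_real_derivative
      (- (2 * cos t * sin t)) * poly (pderiv (pderiv (PP n))) (cos t ^ 2) * (cos t * sin t)
      + poly (pderiv (PP n)) (cos t ^ 2) * (cos t * cos t - sin t * sin t)) (at t)"
    by (auto intro!: derivative_eq_intros simp: algebra_simps)
  have d2: "((\<lambda>t. poly (pderiv (PP n)) (cos t ^ 2) * (cos t * sin t)) has_real_derivative
      real n * (cos (2 * real n * t) * (2 * real n))) (at t)"
    unfolding PP_D1 by (auto intro!: derivative_eq_intros)
  have e: "(- (2 * cos t * sin t)) * poly (pderiv (pderiv (PP n))) (cos t ^ 2) * (cos t * sin t)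
      + poly (pderiv (PP n)) (cos t ^ 2) * (cos t * cos t - sin t * sin t)
      = real n * (cos (2 * real n * t) * (2 * real n))"
    using DERIV_unique[OF d1 d2] .
  have e2: "- 2 * (cos t ^ 2 * sin t ^ 2) * poly (pderiv (pderiv (PP n))) (cos t ^ 2)
      + poly (pderiv (PP n)) (cos t ^ 2) * (cos t ^ 2 - sin t ^ 2)
      = 2 * (real n)^2 * poly (PP n) (cos t ^ 2)"
    using e unfolding PP_cos by (simp add: power2_eq_square algebra_simps)
  then show ?thesis unfolding cx sx by (simp add: algebra_simps power2_eq_square)
qed

lemma PP_I2_pt:
  assumes "0 < x" "x < 1"
  shows "(real n)^2 * poly (PP n) x ^ 2 + x * (1 - x) * poly (pderiv (PP n)) x ^ 2 = (real n)^2"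
proof -
  define t where "t = arccos (sqrt x)"
  have c: "cos t = sqrt x" unfolding t_def by (rule cos_arccos) (use assms real_sqrt_ge_zero[of x] real_sqrt_le_1_iff[of x] in linarith)+
  have cx: "cos t ^ 2 = x" using assms by (simp add: c)
  have sx: "sin t ^ 2 = 1 - x" using cx sin_cos_squared_add[of t] by simp
  have "(poly (pderiv (PP n)) (cos t ^ 2) * (cos t * sin t))^2 = (real n * sin (2 * real n * t))^2"
    by (simp only: PP_D1)
  then have a: "cos t ^ 2 * sin t ^ 2 * poly (pderiv (PP n)) (cos t ^ 2) ^ 2 = (real n)^2 * sin (2 * real n * t) ^ 2"
    by (simp add: power_mult_distrib algebra_simps)
  have "(real n)^2 * poly (PP n) (cos t ^ 2) ^ 2 + cos t ^ 2 * sin t ^ 2 * poly (pderiv (PP n)) (cos t ^ 2) ^ 2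
     = (real n)^2 * (cos (2 * real n * t) ^ 2 + sin (2 * real n * t) ^ 2)"
    unfolding a PP_cos by (simp only: distrib_left)
  also have "\<dots> = (real n)^2" by simp
  finally show ?thesis unfolding cx sx by (simp add: algebra_simps)
qed

lemma PP_ODE: "smult 2 ([:0,1,-1:] * pderiv (pderiv (PP n))) + [:1,-2:] * pderiv (PP n)
      + smult (2 * (real n)^2) (PP n) = 0"
  by (rule poly_eqI_01) (use PP_ODE_pt in \<open>auto simp: algebra_simps\<close>)

lemma PP_I2: "smult ((real n)^2) (PP n * PP n) + [:0,1,-1:] * (pderiv (PP n) * pderiv (PP n)) = [:(real n)^2:]"
  by (rule poly_eqI_01) (use PP_I2_pt in \<open>auto simp: algebra_simps power2_eq_square\<close>)

definition WW :: "nat \<Rightarrow> real poly" where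
  "WW n = [:1,-1:] * pderiv (PP n) + smult (2 * (real n)^2) (PP n)"
definition W1 :: "nat \<Rightarrow> real poly" where "W1 n = synthetic_div (WW n) 0"
definition MM :: "nat \<Rightarrow> real poly" where "MM n = smult (2 / real n) (W1 n)"

lemma PP_ODE_all: "2 * x * (1 - x) * poly (pderiv (pderiv (PP n))) x + (1 - 2 * x) * poly (pderiv (PP n)) x
           + 2 * (real n)^2 * poly (PP n) x = 0"
proof -
  have "poly (smult 2 ([:0,1,-1:] * pderiv (pderiv (PP n))) + [:1,-2:] * pderiv (PP n)
      + smult (2 * (real n)^2) (PP n)) x = 0" by (simp only: PP_ODE) simp
  then show ?thesis by (simp add: algebra_simps)
qed

lemma PP_I2_all: "(real n)^2 * poly (PP n) x ^ 2 + x * (1 - x) * poly (pderiv (PP n)) x ^ 2 = (real n)^2"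
proof -
  have "poly (smult ((real n)^2) (PP n * PP n) + [:0,1,-1:] * (pderiv (PP n) * pderiv (PP n))) x = poly [:(real n)^2:] x"
    by (simp only: PP_I2)
  then show ?thesis by (simp add: algebra_simps power2_eq_square)
qed

lemma WW_0: "poly (WW n) 0 = 0"
  using PP_ODE_all[of 0 n] by (simp add: WW_def)

lemma WW_eq: "WW n = pCons 0 (W1 n)"
proof -
  have a: "[:-0,1:] * synthetic_div (WW n) 0 + [:poly (WW n) 0:] = WW n" by (rule synthetic_div_correct')
  have b: "[:0, 1:] * q = pCons 0 q" for q :: "real poly" by (simp add: mult_pCons_left)
  show ?thesis using a b[of "synthetic_div (WW n) 0"] WW_0[of n] by (simp add: W1_def)
qed

lemma WW_pt: "poly (WW n) x = (1 - x) * poly (pderiv (PP n)) x + 2 * (real n)^2 * poly (PP n) x"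
  by (simp add: WW_def algebra_simps)

lemma WW_pt2: "poly (WW n) x = x * poly (W1 n) x"
  by (subst WW_eq) simp

lemma MM_I1_pt:
  assumes "n > 0" "x \<noteq> 0"
  shows "real n * (x * poly (pderiv (MM n)) x) + 3 * real n / 2 * poly (MM n) x
     = (4 * (real n)^2 - 1) * poly (pderiv (PP n)) x"
proof -
  define P where "P = poly (PP n) x"
  define P1 where "P1 = poly (pderiv (PP n)) x"
  define P2 where "P2 = poly (pderiv (pderiv (PP n))) x"
  define V where "V = poly (W1 n) x"
  define V1 where "V1 = poly (pderiv (W1 n)) x"
  define c where "c = 2 * (real n)^2"
  have f2: "(1 - x) * P1 + c * P = x * V" using WW_pt[of n x] WW_pt2[of n x] by (simp add: P_def P1_def V_def c_def)
  have dl: "pderiv [:1,-1::real:] = [:-1:]" by (simp add: pderiv_pCons)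
  have f3: "poly (pderiv (WW n)) x = - P1 + (1 - x) * P2 + c * P1"
    unfolding WW_def pderiv_add pderiv_mult pderiv_smult dl
    by (simp add: P1_def P2_def c_def algebra_simps)
  have f4: "poly (pderiv (WW n)) x = V + x * V1"
    by (subst WW_eq) (simp add: pderiv_pCons V_def V1_def)
  have f5: "2 * x * (1 - x) * P2 + (1 - 2 * x) * P1 + c * P = 0"
    using PP_ODE_all[of x n] by (simp add: P_def P1_def P2_def c_def)
  have key: "x * (2 * x * V1 + 3 * V) = x * ((2 * c - 1) * P1)"
  proof -
    have "x * (2 * x * V1 + 3 * V) = 2 * x * (V + x * V1) + x * V" by (simp add: algebra_simps)
    also have "\<dots> = 2 * x * (- P1 + (1 - x) * P2 + c * P1) + ((1 - x) * P1 + c * P)"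
      using f3 f4 f2 by simp
    also have "\<dots> = (2 * x * (1 - x) * P2 + (1 - 2 * x) * P1 + c * P) + x * ((2 * c - 1) * P1)"
      by (simp add: algebra_simps)
    also have "\<dots> = x * ((2 * c - 1) * P1)" using f5 by simp
    finally show ?thesis .
  qed
  have key2: "2 * x * V1 + 3 * V = (2 * c - 1) * P1" using key assms(2) by simp
  show ?thesis using key2 assms by (simp add: MM_def V_def V1_def P1_def c_def pderiv_smult algebra_simps)
qed

lemma MM_I1:
  assumes "n > 0"
  shows "smult (real n) ([:0,1:] * pderiv (MM n)) + smult (3 * real n / 2) (MM n)
     = smult (4 * (real n)^2 - 1) (pderiv (PP n))"
  by (rule poly_eqI_01) (use MM_I1_pt[OF assms] in \<open>auto simp: algebra_simps\<close>)

lemma MM_I1_all: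
  assumes "n > 0"
  shows "real n * (x * poly (pderiv (MM n)) x) + 3 * real n / 2 * poly (MM n) x
     = (4 * (real n)^2 - 1) * poly (pderiv (PP n)) x"
proof -
  have "poly (smult (real n) ([:0,1:] * pderiv (MM n)) + smult (3 * real n / 2) (MM n)) x
     = poly (smult (4 * (real n)^2 - 1) (pderiv (PP n))) x" by (simp only: MM_I1[OF assms])
  then show ?thesis by (simp add: algebra_simps)
qed

lemma MM_I0_pt:
  assumes "n > 0" "0 < s" "s < 1"
  shows "(2 * real n - 1) * poly (ch (2*n+1)) s + (2 * real n + 1) * poly (ch (2*n-1)) s
       = s ^ 3 * poly (MM n) (s ^ 2)"
proof -
  define t where "t = arccos s"
  have c: "cos t = s" unfolding t_def by (rule cos_arccos) (use assms in linarith)+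
  define C where "C = cos (2 * real n * t)"
  define S where "S = sin (2 * real n * t)"
  have r1: "real (2*n+1) * t = 2 * real n * t + t" by (simp add: algebra_simps)
  have r2: "real (2*n-1) * t = 2 * real n * t - t" using assms(1) by (simp add: of_nat_diff algebra_simps)
  have l1: "poly (ch (2*n+1)) (cos t) = C * cos t - S * sin t"
    using ch_cos[of "2*n+1" t] unfolding r1 by (simp add: cos_add C_def S_def)
  have l2: "poly (ch (2*n-1)) (cos t) = C * cos t + S * sin t"
    using ch_cos[of "2*n-1" t] unfolding r2 by (simp add: cos_diff C_def S_def)
  have w: "cos t ^ 2 * poly (W1 n) (cos t ^ 2) = sin t ^ 2 * poly (pderiv (PP n)) (cos t ^ 2) + 2 * (real n)^2 * C"
    using WW_pt[of n "cos t ^ 2"] WW_pt2[of n "cos t ^ 2"] PP_cos[of n t]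
    by (simp add: C_def sin_squared_eq)
  have d1: "poly (pderiv (PP n)) (cos t ^ 2) * (cos t * sin t) = real n * S"
    using PP_D1[of n t] by (simp add: S_def)
  have "cos t ^ 3 * poly (MM n) (cos t ^ 2) = 2 / real n * (cos t * (cos t ^ 2 * poly (W1 n) (cos t ^ 2)))"
    by (simp add: MM_def power3_eq_cube power2_eq_square)
  also have "\<dots> = 2 / real n * (sin t * (poly (pderiv (PP n)) (cos t ^ 2) * (cos t * sin t)) + 2 * (real n)^2 * C * cos t)"
    unfolding w by (simp add: algebra_simps power2_eq_square)
  also have "\<dots> = 2 * sin t * S + 4 * real n * C * cos t"
    unfolding d1 using assms(1) by (simp add: field_simps power2_eq_square)
  finally have e: "cos t ^ 3 * poly (MM n) (cos t ^ 2) = 2 * sin t * S + 4 * real n * C * cos t" .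
  have "(2 * real n - 1) * poly (ch (2*n+1)) (cos t) + (2 * real n + 1) * poly (ch (2*n-1)) (cos t)
       = cos t ^ 3 * poly (MM n) (cos t ^ 2)" unfolding e l1 l2 by (simp add: algebra_simps)
  then show ?thesis unfolding c .
qed

lemma MM_I0:
  assumes "n > 0"
  shows "smult (2 * real n - 1) (ch (2*n+1)) + smult (2 * real n + 1) (ch (2*n-1))
       = [:0,0,0,1:] * pcompose (MM n) [:0,0,1:]"
proof (rule poly_eqI_01)
  fix s :: real assume "0 < s" "s < 1"
  from MM_I0_pt[OF assms this] show "poly (smult (2 * real n - 1) (ch (2*n+1)) + smult (2 * real n + 1) (ch (2*n-1))) s
       = poly ([:0,0,0,1:] * pcompose (MM n) [:0,0,1:]) s"
    by (simp add: poly_pcompose power3_eq_cube power2_eq_square)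
qed

lemma MM_formula:
  assumes "n > 0" "x > 0"
  shows "poly (MM n) x = ((2 * real n - 1) * poly (cheb (2*n+1)) (sqrt x)
                          + (2 * real n + 1) * poly (cheb (2*n-1)) (sqrt x)) / (x * sqrt x)"
proof -
  have "poly (smult (2 * real n - 1) (ch (2*n+1)) + smult (2 * real n + 1) (ch (2*n-1))) (sqrt x)
       = poly ([:0,0,0,1:] * pcompose (MM n) [:0,0,1:]) (sqrt x)" by (simp only: MM_I0[OF assms(1)])
  then have "(2 * real n - 1) * poly (cheb (2*n+1)) (sqrt x) + (2 * real n + 1) * poly (cheb (2*n-1)) (sqrt x)
      = (x * sqrt x) * poly (MM n) x"
    using assms(2) by (simp add: cheb_eq poly_pcompose algebra_simps)
  moreover have "x * sqrt x > 0" using assms by simp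
  ultimately show ?thesis using assms by simp
qed

lemma ch_degree: "degree (ch m) = m" and ch_lead: "m > 0 \<Longrightarrow> lead_coeff (ch m) = 2 ^ (m - 1)"
proof -
  have a: "\<forall>k>m. coeff (ch m) k = 0" and b: "coeff (ch m) m = (if m = 0 then 1 else 2 ^ (m - 1))"
    using ch_coeff[of m] by auto
  have "degree (ch m) \<le> m" using a by (intro degree_le) auto
  moreover have "coeff (ch m) m \<noteq> 0" using b by simp
  moreover have "m \<le> degree (ch m)" using le_degree \<open>coeff (ch m) m \<noteq> 0\<close> by blast
  ultimately show d: "degree (ch m) = m" by simp
  show "m > 0 \<Longrightarrow> lead_coeff (ch m) = 2 ^ (m - 1)" using b d by simp
qed

lemma PP_degree: "degree (PP n) = n"
  by (simp add: PP_def degree_pcompose ch_degree)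

lemma PP_lead: "n > 0 \<Longrightarrow> lead_coeff (PP n) = 2 ^ (n - 1) * 2 ^ n"
proof -
  assume "n > 0"
  have "lead_coeff (PP n) = lead_coeff (ch n) * lead_coeff [:-1,2::real:] ^ degree (ch n)"
    unfolding PP_def by (rule lead_coeff_comp) simp
  then show ?thesis using ch_lead[OF \<open>n > 0\<close>] ch_degree[of n] by simp
qed

lemma W1_coeff: "coeff (W1 n) j = coeff (pderiv (PP n)) (Suc j) - coeff (pderiv (PP n)) j + 2 * (real n)^2 * coeff (PP n) (Suc j)"
proof -
  have "coeff (W1 n) j = coeff (WW n) (Suc j)" using WW_eq[of n] by simp
  also have "\<dots> = coeff (pderiv (PP n)) (Suc j) - coeff (pderiv (PP n)) j + 2 * (real n)^2 * coeff (PP n) (Suc j)"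
    by (simp add: WW_def mult_pCons_left)
  finally show ?thesis .
qed

lemma MM_degree_lead:
  assumes "n > 0"
  shows "degree (MM n) = n - 1" "lead_coeff (MM n) = (2 * real n - 1) * 2 ^ (2*n)"
proof -
  let ?c = "(2 / real n) * ((2 * (real n)^2 - real n) * (2 ^ (n - 1) * 2 ^ n))"
  have z: "coeff (PP n) k = 0" if "k > n" for k using that PP_degree[of n] coeff_eq_0 by metis
  have z1: "coeff (pderiv (PP n)) k = 0" if "k \<ge> n" for k using that z by (simp add: coeff_pderiv)
  have cM: "coeff (MM n) j = 2 / real n * coeff (W1 n) j" for j by (simp add: MM_def)
  have hi: "coeff (MM n) j = 0" if "j > n - 1" for j
    using that assms by (simp add: cM W1_coeff z z1)
  have top: "coeff (MM n) (n - 1) = ?c"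
  proof -
    have "coeff (pderiv (PP n)) (n - 1) = real n * lead_coeff (PP n)"
      using assms by (simp add: coeff_pderiv PP_degree)
    moreover have "coeff (PP n) n = 2 ^ (n - 1) * 2 ^ n" using PP_lead[OF assms] PP_degree[of n] by simp
    ultimately show ?thesis using assms
      by (simp add: cM W1_coeff z1 PP_degree algebra_simps)
  qed
  have cne: "?c \<noteq> 0" using assms by (simp add: power2_eq_square)
  have "degree (MM n) \<le> n - 1" using hi by (intro degree_le) auto
  moreover have "n - 1 \<le> degree (MM n)" using top cne le_degree by metis
  ultimately show d: "degree (MM n) = n - 1" by simp
  have "?c = (2 * real n - 1) * 2 ^ (2*n)"
  proof -
    have "(2::real) ^ (n - 1) * 2 ^ n * 2 = 2 ^ (2 * n)"
      using assms by (simp add: power_add[symmetric] mult_2 flip: power_Suc2)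
    then show ?thesis using assms by (simp add: field_simps power2_eq_square)
  qed
  then show "lead_coeff (MM n) = (2 * real n - 1) * 2 ^ (2*n)" using top d by simp
qed




abbreviation mp :: "real poly \<Rightarrow> complex poly" where "mp \<equiv> map_poly complex_of_real"

lemma mp_add: "mp (p + q) = mp p + mp q"
  by (rule poly_eqI) (simp add: coeff_map_poly)
lemma mp_diff: "mp (p - q) = mp p - mp q"
  by (rule poly_eqI) (simp add: coeff_map_poly)
lemma mp_mult: "mp (p * q) = mp p * mp q"
  by (rule poly_eqI) (simp add: coeff_map_poly coeff_mult)
lemma mp_uminus: "mp (- p) = - mp p"
  by (rule poly_eqI) (simp add: coeff_map_poly)
lemma mp_smult: "mp (smult c p) = smult (of_real c) (mp p)"
  by (rule poly_eqI) (simp add: coeff_map_poly)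
lemma mp_pCons: "mp (pCons c p) = pCons (of_real c) (mp p)"
  by (rule map_poly_pCons) simp
lemma mp_pderiv: "mp (pderiv p) = pderiv (mp p)"
  by (rule poly_eqI) (simp add: coeff_map_poly coeff_pderiv)
lemma mp_poly: "poly (mp p) (of_real x) = of_real (poly p x)"
  by (induction p) (simp_all add: mp_pCons)
lemma mp_degree: "degree (mp p) = degree p"
  by (rule degree_map_poly) simp
lemma mp_lead: "lead_coeff (mp p) = of_real (lead_coeff p)"
  by (simp add: mp_degree coeff_map_poly)

lemmas mp_simps = mp_uminus mp_add mp_diff mp_mult mp_smult mp_pCons mp_pderiv

lemma exists_roots:
  fixes p :: "complex poly"
  shows "\<exists>rs. length rs = degree p \<and> p = smult (lead_coeff p) (prod_list (map (\<lambda>r. [:-r, 1:]) rs))"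
proof -
  obtain root where r: "smult (lead_coeff p) (\<Prod>i<degree p. [:-root i, 1:]) = p"
    using complex_poly_decompose' by blast
  have "prod_list (map (\<lambda>r. [:-r, 1:]) (map root [0..<degree p])) = (\<Prod>i<degree p. [:-root i, 1:])"
    using prod.distinct_set_conv_list[of "[0..<degree p]" "\<lambda>i. [:-root i, 1:]"]
    by (simp add: atLeast0LessThan o_def)
  then show ?thesis using r by (intro exI[of _ "map root [0..<degree p]"]) auto
qed

lemma disc_roots:
  fixes p :: "complex poly"
  obtains r where "p = smult (lead_coeff p) (\<Prod>i<degree p. [:-r i, 1:])"
    "disc p = lead_coeff p ^ (2 * degree p - 2) *
                (\<Prod>i<degree p. \<Prod>j\<in>{i<..<degree p}. (r i - r j)^2)"
proof -
  define rs where "rs = (SOME rs. length rs = degree p \<and>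
                        p = smult (lead_coeff p) (prod_list (map (\<lambda>r. [:-r, 1:]) rs)))"
  have h: "length rs = degree p \<and> p = smult (lead_coeff p) (prod_list (map (\<lambda>r. [:-r, 1:]) rs))"
    unfolding rs_def by (rule someI_ex) (rule exists_roots)
  have "prod_list (map (\<lambda>r. [:-r, 1:]) rs) = (\<Prod>i<degree p. [:-(rs ! i), 1:])"
    using h by (subst prod.list_conv_set_nth) (auto simp: atLeast0LessThan)
  then have 1: "p = smult (lead_coeff p) (\<Prod>i<degree p. [:-(rs ! i), 1:])" using h by simp
  have 2: "disc p = lead_coeff p ^ (2 * degree p - 2) *
                (\<Prod>i<degree p. \<Prod>j\<in>{i<..<degree p}. (rs ! i - rs ! j)^2)"
    unfolding disc_def Let_def rs_def[symmetric] ..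
  show ?thesis using that[OF 1 2] .
qed

lemma G1: fixes d :: nat shows "poly (smult L (\<Prod>i<d. [:-r i, 1:])) z = L * (\<Prod>i<d. (z - r i :: complex))"
  by (simp add: poly_prod)

lemma G2:
  fixes i d :: nat
  assumes "i < d"
  shows "poly (pderiv (smult L (\<Prod>i<d. [:-r i, 1:]))) (r i) = L * (\<Prod>j\<in>{..<d}-{i}. (r i - r j :: complex))"
proof -
  have "poly (pderiv (smult L (\<Prod>i<d. [:-r i, 1:]))) (r i)
      = L * (\<Sum>a<d. \<Prod>j\<in>{..<d}-{a}. (r i - r j))"
    by (simp add: pderiv_smult pderiv_prod poly_sum poly_prod pderiv_pCons)
  also have "(\<Sum>a<d. \<Prod>j\<in>{..<d}-{a}. (r i - r j)) = (\<Prod>j\<in>{..<d}-{i}. (r i - r j))"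
  proof -
    have "(\<Sum>a<d. \<Prod>j\<in>{..<d}-{a}. (r i - r j)) = (\<Prod>j\<in>{..<d}-{i}. (r i - r j))
       + (\<Sum>a\<in>{..<d}-{i}. \<Prod>j\<in>{..<d}-{a}. (r i - r j))"
      using assms by (subst sum.remove[of "{..<d}" i]) auto
    moreover have "(\<Sum>a\<in>{..<d}-{i}. \<Prod>j\<in>{..<d}-{a}. (r i - r j)) = 0"
      using assms by (intro sum.neutral ballI prod_zero) auto
    ultimately show ?thesis by simp
  qed
  finally show ?thesis .
qed

lemma pairs_prod:
  fixes f :: "nat \<Rightarrow> nat \<Rightarrow> 'a::comm_monoid_mult"
  shows "(\<Prod>i<d. \<Prod>j\<in>{..<d}-{i}. f i j) = (\<Prod>i<d. \<Prod>j\<in>{i<..<d}. f i j * f j i)"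
proof (induction d)
  case 0 then show ?case by simp
next
  case (Suc d)
  have a: "(\<Prod>j\<in>{..<Suc d}-{i}. f i j) = f i d * (\<Prod>j\<in>{..<d}-{i}. f i j)" if "i < d" for i
  proof -
    have "{..<Suc d}-{i} = insert d ({..<d}-{i})" using that by auto
    then show ?thesis by simp
  qed
  have b: "(\<Prod>j\<in>{i<..<Suc d}. f i j * f j i) = (f i d * f d i) * (\<Prod>j\<in>{i<..<d}. f i j * f j i)" if "i < d" for i
  proof -
    have "{i<..<Suc d} = insert d {i<..<d}" using that by auto
    then show ?thesis by simp
  qed
  have "(\<Prod>i<Suc d. \<Prod>j\<in>{..<Suc d}-{i}. f i j)
      = (\<Prod>i<d. f i d * (\<Prod>j\<in>{..<d}-{i}. f i j)) * (\<Prod>j\<in>{..<Suc d}-{d}. f d j)"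
    using a by simp
  also have "(\<Prod>j\<in>{..<Suc d}-{d}. f d j) = (\<Prod>j<d. f d j)"
  proof -
    have "{..<Suc d}-{d} = {..<d}" by auto
    then show ?thesis by simp
  qed
  also have "(\<Prod>i<d. f i d * (\<Prod>j\<in>{..<d}-{i}. f i j)) = (\<Prod>i<d. f i d) * (\<Prod>i<d. \<Prod>j\<in>{..<d}-{i}. f i j)"
    by (simp add: prod.distrib)
  finally have L: "(\<Prod>i<Suc d. \<Prod>j\<in>{..<Suc d}-{i}. f i j) = (\<Prod>i<d. f i d) * (\<Prod>i<d. \<Prod>j\<in>{i<..<d}. f i j * f j i) * (\<Prod>j<d. f d j)"
    using Suc.IH by simp
  have "(\<Prod>i<Suc d. \<Prod>j\<in>{i<..<Suc d}. f i j * f j i) = (\<Prod>i<d. (f i d * f d i) * (\<Prod>j\<in>{i<..<d}. f i j * f j i))"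
  proof -
    have "{d<..<Suc d} = {}" by auto
    then show ?thesis using b by simp
  qed
  also have "\<dots> = (\<Prod>i<d. f i d) * (\<Prod>i<d. f d i) * (\<Prod>i<d. \<Prod>j\<in>{i<..<d}. f i j * f j i)"
    by (simp add: prod.distrib)
  finally show ?case using L by (simp add: ac_simps)
qed

lemma G3:
  fixes r :: "nat \<Rightarrow> complex" and d :: nat
  shows "(\<Prod>i<d. L * (\<Prod>j\<in>{..<d}-{i}. (r i - r j)))^2 = L^(2*d) * (\<Prod>i<d. \<Prod>j\<in>{i<..<d}. (r i - r j)^2)^2"
proof -
  have "(\<Prod>i<d. L * (\<Prod>j\<in>{..<d}-{i}. (r i - r j))) = L^d * (\<Prod>i<d. \<Prod>j\<in>{i<..<d}. (r i - r j) * (r j - r i))"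
    by (simp add: prod.distrib pairs_prod[of "\<lambda>i j. r i - r j"])
  then have "(\<Prod>i<d. L * (\<Prod>j\<in>{..<d}-{i}. (r i - r j)))^2 = (L^d)^2 * (\<Prod>i<d. \<Prod>j\<in>{i<..<d}. ((r i - r j) * (r j - r i))^2)"
    by (simp add: power_mult_distrib prod_power_distrib)
  also have "(\<Prod>i<d. \<Prod>j\<in>{i<..<d}. ((r i - r j) * (r j - r i))^2) = (\<Prod>i<d. \<Prod>j\<in>{i<..<d}. ((r i - r j)^2)^2)"
    by (intro prod.cong refl) (simp add: power2_eq_square algebra_simps)
  also have "\<dots> = (\<Prod>i<d. \<Prod>j\<in>{i<..<d}. (r i - r j)^2)^2"
    by (simp add: prod_power_distrib)
  finally show ?thesis by (simp add: power_mult[symmetric] mult.commute)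
qed




lemma real_facts:
  assumes "n > 0"
  shows "poly (PP n) 0 ^ 2 = 1"
    "poly (pderiv (PP n)) 0 ^ 2 = 4 * real n ^ 4"
    "poly (MM n) 0 ^ 2 = 16 * real n ^ 2 * (4 * real n ^ 2 - 1) ^ 2 / 9"
    "poly (MM n) 0 \<noteq> 0" "poly (pderiv (PP n)) 0 \<noteq> 0"
proof -
  have a: "(real n)^2 * poly (PP n) 0 ^ 2 = (real n)^2" using PP_I2_all[of n 0] by simp
  then show p0: "poly (PP n) 0 ^ 2 = 1" using assms by simp
  have b: "poly (pderiv (PP n)) 0 = - 2 * (real n)^2 * poly (PP n) 0" using PP_ODE_all[of 0 n] by simp
  show p1: "poly (pderiv (PP n)) 0 ^ 2 = 4 * real n ^ 4" unfolding b using p0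
    by (simp add: power_mult_distrib)
  have c: "3 * real n / 2 * poly (MM n) 0 = (4 * (real n)^2 - 1) * poly (pderiv (PP n)) 0"
    using MM_I1_all[OF assms, of 0] by simp
  then have c2: "poly (MM n) 0 = 2 * (4 * (real n)^2 - 1) * poly (pderiv (PP n)) 0 / (3 * real n)"
    using assms by (simp add: field_simps)
  show "poly (MM n) 0 ^ 2 = 16 * real n ^ 2 * (4 * real n ^ 2 - 1) ^ 2 / 9"
  proof -
    have "poly (MM n) 0 ^ 2 = 4 * (4 * (real n)^2 - 1)^2 * poly (pderiv (PP n)) 0 ^ 2 / (9 * (real n)^2)"
      using assms unfolding c2 by (simp add: field_simps power2_eq_square)
    also have "\<dots> = 4 * (4 * (real n)^2 - 1)^2 * (4 * (real n ^ 2 * real n ^ 2)) / (9 * (real n)^2)"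
      unfolding p1 by (subst power_add[symmetric]) simp
    also have "\<dots> = 16 * real n ^ 2 * (4 * real n ^ 2 - 1) ^ 2 / 9"
      using assms by (simp add: field_simps)
    finally show ?thesis .
  qed
  show "poly (pderiv (PP n)) 0 \<noteq> 0" using p1 assms by auto
  moreover have "4 * (real n)^2 - 1 \<noteq> 0"
  proof -
    have "(real n)^2 \<ge> 1" using assms by simp
    then show ?thesis by simp
  qed
  ultimately show "poly (MM n) 0 \<noteq> 0" using c2 assms by simp
qed

lemma lead_P1:
  assumes "n > 0"
  shows "degree (pderiv (PP n)) = n - 1" "lead_coeff (pderiv (PP n)) = real n * (2 ^ (n - 1) * 2 ^ n)"
proof -
  show d: "degree (pderiv (PP n)) = n - 1" by (simp add: degree_pderiv PP_degree)
  have "coeff (pderiv (PP n)) (n - 1) = real n * coeff (PP n) n"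
    using assms by (simp add: coeff_pderiv)
  then show "lead_coeff (pderiv (PP n)) = real n * (2 ^ (n - 1) * 2 ^ n)"
    using PP_lead[OF assms] PP_degree[of n] d by simp
qed

lemma complex_ids:
  assumes "n > 0"
  shows "of_nat n * (z * poly (pderiv (mp (MM n))) z) + 3 * of_nat n / 2 * poly (mp (MM n)) z
          = (4 * of_nat n ^ 2 - 1) * poly (mp (pderiv (PP n))) z"
    "z * poly (mp (MM n)) z = 2 / of_nat n * ((1 - z) * poly (mp (pderiv (PP n))) z + 2 * of_nat n ^ 2 * poly (mp (PP n)) z)"
    "of_nat n ^ 2 * poly (mp (PP n)) z ^ 2 + z * (1 - z) * poly (mp (pderiv (PP n))) z ^ 2 = of_nat n ^ 2"
proof -
  have "mp (smult (real n) ([:0,1:] * pderiv (MM n)) + smult (3 * real n / 2) (MM n))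
     = mp (smult (4 * (real n)^2 - 1) (pderiv (PP n)))" by (simp only: MM_I1[OF assms])
  then have "poly (mp (smult (real n) ([:0,1:] * pderiv (MM n)) + smult (3 * real n / 2) (MM n))) z
     = poly (mp (smult (4 * (real n)^2 - 1) (pderiv (PP n)))) z" by simp
  then show "of_nat n * (z * poly (pderiv (mp (MM n))) z) + 3 * of_nat n / 2 * poly (mp (MM n)) z
          = (4 * of_nat n ^ 2 - 1) * poly (mp (pderiv (PP n))) z"
    by (simp add: mp_simps algebra_simps)
  have e2: "pCons 0 (MM n) = smult (2 / real n) (WW n)"
    by (simp add: MM_def WW_eq)
  then have "poly (mp (pCons 0 (MM n))) z = poly (mp (smult (2 / real n) ([:1,-1:] * pderiv (PP n) + smult (2 * (real n)^2) (PP n)))) z"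
    by (simp add: WW_def)
  then show "z * poly (mp (MM n)) z = 2 / of_nat n * ((1 - z) * poly (mp (pderiv (PP n))) z + 2 * of_nat n ^ 2 * poly (mp (PP n)) z)"
    by (simp add: mp_simps algebra_simps)
  have "poly (mp (smult ((real n)^2) (PP n * PP n) + [:0,1,-1:] * (pderiv (PP n) * pderiv (PP n)))) z = poly (mp [:(real n)^2:]) z"
    by (simp only: PP_I2)
  then show "of_nat n ^ 2 * poly (mp (PP n)) z ^ 2 + z * (1 - z) * poly (mp (pderiv (PP n))) z ^ 2 = of_nat n ^ 2"
    by (simp add: mp_simps algebra_simps power2_eq_square)
qed




lemma elim:
  fixes X L Q R S T U M0 P0 e ab nn :: complex and d m :: nat
  assumes a1: "X * L^(2*d) = L^(4*m) * Q^2" and a2: "nn^d * R * Q = ab^d * S"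
    and a3: "M0^2 = L^2 * R^2" and a4: "S^2 * L^(2*d) = e^(2*d) * T^2"
    and a5: "T^2 * U^2 = (16*nn^2)^d" and a6: "P0^2 = e^2 * U^2"
    and dm: "d = m + 1" and L0: "L \<noteq> 0" and n0: "nn \<noteq> 0"
  shows "X * (L^2 * P0^2 * M0^2) = ab^(2*d) * e^(2*d+2) * 16^d"
proof -
  have b1: "X * L^(2*d) * (nn^d * R)^2 = L^(4*m) * (nn^d * R * Q)^2"
    using a1 by (simp add: power_mult_distrib)
  also have "\<dots> = L^(4*m) * (ab^d * S)^2" using a2 by simp
  finally have b2: "X * L^(2*d) * nn^(2*d) * R^2 * L^2 * L^(2*d) * U^2 * e^2 = L^(4*m) * ab^(2*d) * L^2 * (S^2 * L^(2*d)) * U^2 * e^2"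
    by (simp add: power_mult_distrib power_mult algebra_simps)
  also have "\<dots> = L^(4*m) * ab^(2*d) * L^2 * e^(2*d) * e^2 * (T^2 * U^2)" using a4 by (simp add: algebra_simps)
  also have "\<dots> = L^(4*m) * ab^(2*d) * L^2 * e^(2*d) * e^2 * (16^d * nn^(2*d))" using a5 by (simp add: power_mult_distrib power_mult)
  finally have b3: "X * L^(2*d) * nn^(2*d) * R^2 * L^2 * L^(2*d) * U^2 * e^2 = L^(4*m) * ab^(2*d) * L^2 * e^(2*d) * e^2 * (16^d * nn^(2*d))" .
  have l: "(X * (L^2 * P0^2 * M0^2)) * (L^(4*m+2) * nn^(2*d)) = X * L^(2*d) * nn^(2*d) * R^2 * L^2 * L^(2*d) * U^2 * e^2"
    unfolding a3 a6 dm by (simp add: power_add power_mult algebra_simps eval_nat_numeral)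
  have r: "(ab^(2*d) * e^(2*d+2) * 16^d) * (L^(4*m+2) * nn^(2*d)) = L^(4*m) * ab^(2*d) * L^2 * e^(2*d) * e^2 * (16^d * nn^(2*d))"
    by (simp add: power_add algebra_simps power2_eq_square)
  have b4: "(X * (L^2 * P0^2 * M0^2)) * (L^(4*m+2) * nn^(2*d)) = (ab^(2*d) * e^(2*d+2) * 16^d) * (L^(4*m+2) * nn^(2*d))"
    by (simp only: l b3 r)
  have "L^(4*m+2) * nn^(2*d) \<noteq> 0" using L0 n0 by simp
  then show ?thesis using b4 by (metis mult_right_cancel)
qed


lemma disc_main:
  fixes m n :: nat
  assumes nm: "n = m + 2"
  shows "disc (mp (MM n))^2 * (of_real (lead_coeff (MM n))^2 * of_real (poly (pderiv (PP n)) 0)^2 * of_real (poly (MM n) 0)^2)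
    = (4 * of_nat n^2 - 1)^(2*(m+1)) * of_real (lead_coeff (pderiv (PP n)))^(2*(m+1)+2) * 16^(m+1)"
proof -
  define d where "d = m + 1"
  have n0: "n > 0" using nm by simp
  define Mc where "Mc = mp (MM n)"
  define Pc1 where "Pc1 = mp (pderiv (PP n))"
  define nn where "nn = (of_nat n :: complex)"
  define ab where "ab = 4 * nn^2 - 1"
  have dM: "degree Mc = d" unfolding Mc_def d_def using MM_degree_lead(1)[OF n0] nm by (simp add: mp_degree)
  have dP: "degree Pc1 = d" unfolding Pc1_def d_def using lead_P1(1)[OF n0] nm by (simp add: mp_degree)
  define L where "L = lead_coeff Mc"
  have Lr: "L = of_real (lead_coeff (MM n))" unfolding L_def Mc_def by (rule mp_lead)
  have L0: "L \<noteq> 0"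
  proof -
    have "(2 * real n - 1) * 2 ^ (2*n) \<noteq> 0" using n0 by simp
    then have "lead_coeff (MM n) \<noteq> 0" unfolding MM_degree_lead(2)[OF n0] .
    then show ?thesis unfolding Lr by simp
  qed
  define e where "e = lead_coeff Pc1"
  have er: "e = of_real (lead_coeff (pderiv (PP n)))" unfolding e_def Pc1_def by (rule mp_lead)
  have e0: "e \<noteq> 0" unfolding er lead_P1(2)[OF n0] using n0 by simp
  have nn0: "nn \<noteq> 0" using n0 by (simp add: nn_def)
  obtain r where hr0: "Mc = smult (lead_coeff Mc) (\<Prod>i<degree Mc. [:-r i, 1:])"
    and hd0: "disc Mc = lead_coeff Mc ^ (2 * degree Mc - 2) * (\<Prod>i<degree Mc. \<Prod>j\<in>{i<..<degree Mc}. (r i - r j)^2)"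
    by (rule disc_roots)
  have hr: "Mc = smult L (\<Prod>i<d. [:-r i, 1:])" using hr0 unfolding dM L_def .
  define Pi2 where "Pi2 = (\<Prod>i<d. \<Prod>j\<in>{i<..<d}. (r i - r j)^2)"
  have hd: "disc Mc = L ^ (2 * m) * Pi2" using hd0 unfolding dM L_def Pi2_def d_def by simp
  obtain q where hq0: "smult (lead_coeff Pc1) (\<Prod>i<degree Pc1. [:-q i, 1:]) = Pc1"
    by (rule complex_poly_decompose')
  have hq: "Pc1 = smult e (\<Prod>k<d. [:-q k, 1:])" using hq0 unfolding dP e_def by simp
  define Q where "Q = (\<Prod>i<d. poly (pderiv Mc) (r i))"
  define R where "R = (\<Prod>i<d. r i)"
  define S where "S = (\<Prod>i<d. poly Pc1 (r i))"
  define T where "T = (\<Prod>k<d. poly Mc (q k))"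
  define U where "U = (\<Prod>k<d. q k)"
  define X where "X = disc Mc ^ 2"
  have Qe: "Q = (\<Prod>i<d. L * (\<Prod>j\<in>{..<d}-{i}. (r i - r j)))"
    unfolding Q_def by (rule prod.cong[OF refl]) (subst hr, rule G2, simp)
  have a1: "X * L^(2*d) = L^(4*m) * Q^2"
  proof -
    have "Q^2 = L^(2*d) * Pi2^2" unfolding Qe Pi2_def by (rule G3)
    then show ?thesis unfolding X_def hd by (simp add: power_mult_distrib power_mult[symmetric] algebra_simps)
  qed
  have Mr: "poly Mc (r i) = 0" if "i < d" for i
    using that by (subst hr) (auto simp: poly_prod prod_zero_iff)
  have a2: "nn^d * R * Q = ab^d * S"
  proof -
    have "nn * (r i * poly (pderiv Mc) (r i)) = ab * poly Pc1 (r i)" if "i < d" for i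
      using complex_ids(1)[OF n0, of "r i"] Mr[OF that] unfolding Mc_def Pc1_def nn_def ab_def by simp
    then have "(\<Prod>i<d. nn * (r i * poly (pderiv Mc) (r i))) = (\<Prod>i<d. ab * poly Pc1 (r i))"
      by (intro prod.cong) auto
    then show ?thesis unfolding R_def Q_def S_def by (simp add: prod.distrib mult.assoc)
  qed
  have a3: "poly Mc 0 ^ 2 = L^2 * R^2"
  proof -
    have "poly Mc 0 = L * (\<Prod>i<d. (- r i))" by (subst hr) (simp add: poly_prod)
    then have "poly Mc 0 ^ 2 = L^2 * (\<Prod>i<d. (- r i)^2)" by (simp add: power_mult_distrib prod_power_distrib)
    then show ?thesis unfolding R_def by (simp add: prod_power_distrib)
  qed
  have a4: "S^2 * L^(2*d) = e^(2*d) * T^2"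
  proof -
    have S1: "S = e^d * (\<Prod>i<d. \<Prod>k<d. (r i - q k))"
      unfolding S_def by (subst hq) (simp add: poly_prod prod.distrib)
    have T1: "T = L^d * (\<Prod>k<d. \<Prod>i<d. (q k - r i))"
      unfolding T_def by (subst hr) (simp add: poly_prod prod.distrib)
    have sw: "(\<Prod>i<d. \<Prod>k<d. (r i - q k))^2 = (\<Prod>k<d. \<Prod>i<d. (q k - r i))^2"
    proof -
      have "(\<Prod>i<d. \<Prod>k<d. (r i - q k))^2 = (\<Prod>i<d. \<Prod>k<d. (r i - q k)^2)" by (simp add: prod_power_distrib)
      also have "\<dots> = (\<Prod>k<d. \<Prod>i<d. (r i - q k)^2)" by (rule prod.swap)
      also have "\<dots> = (\<Prod>k<d. \<Prod>i<d. (q k - r i)^2)" by (simp add: power2_commute)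
      also have "\<dots> = (\<Prod>k<d. \<Prod>i<d. (q k - r i))^2" by (simp add: prod_power_distrib)
      finally show ?thesis .
    qed
    show ?thesis unfolding S1 T1 by (simp add: power_mult_distrib sw power_mult[symmetric] algebra_simps)
  qed
  have a5: "T^2 * U^2 = (16 * nn^2)^d"
  proof -
    have "(q k * poly Mc (q k))^2 = 16 * nn^2" if "k < d" for k
    proof -
      have z: "poly Pc1 (q k) = 0" using that by (subst hq) (auto simp: poly_prod prod_zero_iff)
      have i2: "nn^2 * poly (mp (PP n)) (q k) ^ 2 = nn^2"
        using complex_ids(3)[OF n0, of "q k"] z unfolding Pc1_def nn_def by simp
      then have p2: "poly (mp (PP n)) (q k) ^ 2 = 1" using nn0 by simp
      have "q k * poly Mc (q k) = 4 * nn * poly (mp (PP n)) (q k)"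
        using complex_ids(2)[OF n0, of "q k"] z nn0 unfolding Pc1_def nn_def Mc_def
        by (simp add: field_simps power2_eq_square)
      then show ?thesis using p2 by (simp add: power_mult_distrib)
    qed
    then have "(\<Prod>k<d. (q k * poly Mc (q k))^2) = (\<Prod>k<d. 16 * nn^2)" by (intro prod.cong) auto
    then show ?thesis unfolding T_def U_def by (simp add: prod_power_distrib prod.distrib power_mult_distrib mult.commute)
  qed
  have a6: "poly Pc1 0 ^ 2 = e^2 * U^2"
  proof -
    have "poly Pc1 0 = e * (\<Prod>k<d. (- q k))" by (subst hq) (simp add: poly_prod)
    then have "poly Pc1 0 ^ 2 = e^2 * (\<Prod>k<d. (- q k)^2)" by (simp add: power_mult_distrib prod_power_distrib)
    then show ?thesis unfolding U_def by (simp add: prod_power_distrib)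
  qed
  have fin: "X * (L^2 * poly Pc1 0 ^2 * poly Mc 0 ^2) = ab^(2*d) * e^(2*d+2) * 16^d"
    by (rule elim[OF a1 a2 a3 a4 a5 a6 d_def L0 nn0])
  have P0: "poly Pc1 0 = of_real (poly (pderiv (PP n)) 0)" unfolding Pc1_def using mp_poly[of _ 0] by simp
  have M0: "poly (mp (MM n)) 0 = of_real (poly (MM n) 0)" using mp_poly[of _ 0] by simp
  show ?thesis using fin unfolding X_def P0 Lr er ab_def nn_def d_def Mc_def M0 by simp
qed




lemma arith_main:
  fixes k :: nat and N :: real
  assumes NN: "N = real k + 3"
  shows "((2*N-1) * 2^(2*(k+3)))^2 * (4*N^4) * (16*N^2*(4*N^2-1)^2/9) * (3*(2*N-1)^k*(2*N+1)^(k+1)*N^k*2^(2*k^2+11*k+10))^2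
     = (4*N^2-1)^(2*(k+2)) * (N*(2^(k+2)*2^(k+3)))^(2*(k+2)+2) * 16^(k+2)"
proof -
  define a where "a = 2*N-1"
  define b where "b = 2*N+1"
  define A where "A = a^k"
  define B where "B = b^k"
  define M where "M = N^k"
  define t where "t = (2::real)^k"
  define u where "u = (2::real)^(k*k)"
  have ab: "4*N^2-1 = a*b" by (simp add: a_def b_def algebra_simps power2_eq_square)
  have f1: "((2*N-1) * 2^(2*(k+3)))^2 = a^2 * t^4 * 2^12"
  proof -
    have h: "(2::real)^(2*(k+3)) = t^2 * 2^6" by (simp add: t_def power_add power_mult[symmetric] mult.commute)
    have "((2*N-1) * 2^(2*(k+3)))^2 = (a * (t^2 * 2^6))^2" unfolding h a_def ..
    also have "\<dots> = a^2 * t^4 * 2^12" by (simp add: power_mult_distrib power_mult[symmetric])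
    finally show ?thesis .
  qed
  have f4: "(3*(2*N-1)^k*(2*N+1)^(k+1)*N^k*2^(2*k^2+11*k+10))^2 = 9 * A^2 * B^2 * b^2 * M^2 * (u^2 * t^11 * 2^10)^2"
  proof -
    have e: "2*k^2+11*k+10 = k*k + k*k + k*11 + 10" by (simp add: power2_eq_square)
    have "(2::real)^(2*k^2+11*k+10) = 2^(k*k) * 2^(k*k) * 2^(k*11) * 2^10" unfolding e by (simp only: power_add)
    also have "\<dots> = u^2 * t^11 * 2^10" unfolding u_def t_def power_mult[of "2::real" k 11] by (simp add: power2_eq_square)
    finally have h: "(2::real)^(2*k^2+11*k+10) = u^2 * t^11 * 2^10" .
    have "(3*(2*N-1)^k*(2*N+1)^(k+1)*N^k*2^(2*k^2+11*k+10))^2 = (3*A*(B*b)*M*(u^2 * t^11 * 2^10))^2"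
      unfolding h by (simp add: A_def B_def M_def a_def b_def ac_simps)
    also have "\<dots> = 9 * A^2 * B^2 * b^2 * M^2 * (u^2 * t^11 * 2^10)^2"
      by (simp only: power_mult_distrib) simp
    finally show ?thesis .
  qed
  have g1: "(4*N^2-1)^(2*(k+2)) = A^2 * a^4 * B^2 * b^4"
  proof -
    have ex: "2*(k+2) = k*2 + 4" by simp
    have "(a*b)^(2*(k+2)) = ((a*b)^k)^2 * (a*b)^4"
      unfolding ex power_add power_mult ..
    also have "\<dots> = A^2 * a^4 * B^2 * b^4" by (simp only: A_def B_def power_mult_distrib mult_ac)
    finally show ?thesis unfolding ab .
  qed
  have g2: "(N*(2^(k+2)*2^(k+3)))^(2*(k+2)+2) = M^2 * N^6 * u^4 * t^22 * 2^30"
  proof -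
    have ex2: "2*k+5 = (k+2)+(k+3)" by simp
    have h1: "(2::real)^(k+2)*2^(k+3) = 2^(2*k+5)" by (subst ex2, subst power_add, rule refl)
    have h2: "((2::real)^(2*k+5))^(2*(k+2)+2) = 2^(4*(k*k) + 22*k + 30)"
    proof -
      have "(2*k+5)*(2*(k+2)+2) = 4*(k*k) + 22*k + 30" by (simp add: algebra_simps)
      then show ?thesis by (metis power_mult)
    qed
    have h3: "(2::real)^(4*(k*k) + 22*k + 30) = u^4 * t^22 * 2^30"
      by (simp add: u_def t_def power_add power_mult[symmetric] mult.commute)
    have ex3: "2*(k+2)+2 = k*2+6" by simp
    have h4: "N^(2*(k+2)+2) = M^2 * N^6" unfolding ex3 power_add power_mult M_def ..
    have "(N*(2^(k+2)*2^(k+3)))^(2*(k+2)+2) = N^(2*(k+2)+2) * ((2::real)^(2*k+5))^(2*(k+2)+2)"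
      unfolding h1 power_mult_distrib ..
    also have "\<dots> = M^2 * N^6 * (u^4 * t^22 * 2^30)" unfolding h4 h2 h3 ..
    finally show ?thesis by (simp only: mult_ac)
  qed
  have g3: "(16::real)^(k+2) = t^4 * 2^8"
  proof -
    have "(2::real)^(k*4) = 16^k" by (subst mult.commute, subst power_mult) simp
    then show ?thesis by (simp add: t_def power_add power_mult[symmetric])
  qed
  show ?thesis unfolding f1 f4 g1 g2 g3 ab[symmetric]
    by (simp add: ab field_simps)
qed


theorem theorem3:
  fixes n :: nat
  assumes "n \<ge> 2"
  shows "\<exists>M :: real poly.
           (\<forall>x::real. x > 0 \<longrightarrow>
              poly M x = ((2 * real n - 1) * poly (cheb (2*n+1)) (sqrt x)
                          + (2 * real n + 1) * poly (cheb (2*n-1)) (sqrt x)) / (x * sqrt x))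
         \<and> degree M = n - 1
         \<and> lead_coeff M = (2 * real n - 1) * 2 ^ (2*n)
         \<and> (let D = 3 * (2 * real n - 1) powi (int n - 3) * (2 * real n + 1) powi (int n - 2)
                     * real n powi (int n - 3) * 2 powi (2 * int n ^ 2 - int n - 5)
            in disc (map_poly complex_of_real M) = complex_of_real D
             \<or> disc (map_poly complex_of_real M) = - complex_of_real D)"
proof -
  have n0: "n > 0" using assms by simp
  obtain m where nm: "n = m + 2" using assms le_Suc_ex by (metis add.commute)
  define D where "D = 3 * (2 * real n - 1) powi (int n - 3) * (2 * real n + 1) powi (int n - 2)
                     * real n powi (int n - 3) * 2 powi (2 * int n ^ 2 - int n - 5)"
  define Lr where "Lr = lead_coeff (MM n)"
  define P0 where "P0 = poly (pderiv (PP n)) 0"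
  define M0 where "M0 = poly (MM n) 0"
  define er where "er = lead_coeff (pderiv (PP n))"
  have Lv: "Lr = (2 * real n - 1) * 2 ^ (2*n)" unfolding Lr_def by (rule MM_degree_lead(2)[OF n0])
  have P0v: "P0^2 = 4 * real n ^ 4" unfolding P0_def by (rule real_facts(2)[OF n0])
  have M0v: "M0^2 = 16 * real n ^ 2 * (4 * real n ^ 2 - 1) ^ 2 / 9" unfolding M0_def by (rule real_facts(3)[OF n0])
  have ev: "er = real n * (2 ^ (n - 1) * 2 ^ n)" unfolding er_def by (rule lead_P1(2)[OF n0])
  have key: "Lr^2 * P0^2 * M0^2 * D^2 = (4 * real n^2 - 1)^(2*(m+1)) * er^(2*(m+1)+2) * 16^(m+1)"
  proof (cases m)
    case 0
    then have n2: "n = 2" using nm by simp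
    have "D = 1" unfolding D_def n2 by (simp add: power_int_minus)
    then show ?thesis unfolding Lv P0v M0v ev using n2 0 by simp
  next
    case (Suc k)
    then have nk: "n = k + 3" using nm by simp
    have e1: "int n - 3 = int k" using nk by simp
    have e2: "int n - 2 = int (k+1)" using nk by simp
    have e3: "2 * int n ^ 2 - int n - 5 = int (2*k^2+11*k+10)" using nk by (simp add: power2_eq_square algebra_simps)
    have Dv: "D = 3*(2*real n-1)^k*(2*real n+1)^(k+1)*real n^k*2^(2*k^2+11*k+10)"
      unfolding D_def e1 e2 e3 power_int_of_nat ..
    have "n - 1 = k + 2" using nk by simp
    then show ?thesis unfolding Lv P0v M0v ev Dv using arith_main[of "real n" k] nk Suc
      by (simp add: mult_ac)
  qed
  have dm: "disc (mp (MM n))^2 * (of_real Lr^2 * of_real P0^2 * of_real M0^2)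
    = (4 * of_nat n^2 - 1)^(2*(m+1)) * of_real er^(2*(m+1)+2) * 16^(m+1)"
    unfolding Lr_def P0_def M0_def er_def by (rule disc_main[OF nm])
  have key2: "(of_real Lr^2 * of_real P0^2 * of_real M0^2) * of_real D^2
    = (4 * of_nat n^2 - 1)^(2*(m+1)) * of_real er^(2*(m+1)+2) * (16::complex)^(m+1)"
  proof -
    have "complex_of_real (Lr^2 * P0^2 * M0^2 * D^2) = of_real ((4 * real n^2 - 1)^(2*(m+1)) * er^(2*(m+1)+2) * 16^(m+1))"
      by (simp only: key)
    then show ?thesis by simp
  qed
  have K0: "(of_real Lr^2 * of_real P0^2 * of_real M0^2 :: complex) \<noteq> 0"
  proof -
    have "Lr \<noteq> 0" unfolding Lv using n0 by simp
    moreover have "P0 \<noteq> 0" unfolding P0_def by (rule real_facts(5)[OF n0])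
    moreover have "M0 \<noteq> 0" unfolding M0_def by (rule real_facts(4)[OF n0])
    ultimately show ?thesis by simp
  qed
  have "disc (mp (MM n))^2 = (of_real D)^2"
    using dm key2 K0 by (metis mult.commute mult_left_cancel)
  then have "disc (mp (MM n)) = of_real D \<or> disc (mp (MM n)) = - of_real D"
    by (simp add: power2_eq_iff)
  then show ?thesis
    using MM_formula[OF n0] MM_degree_lead[OF n0] unfolding D_def Let_def
    by (intro exI[of _ "MM n"]) auto
qed


end
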